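(* Let $m$ be a positive integer and $G$ a connected, almost asymmetric graph. If $n(G)-\max\{|v^*|:\ v^*\in V(G^* )\}\neq m$, then $D(G)\neq n(G)-m$.
   Context: All graphs are finite and simple; $n(G)=|V(G)|$; $N_G(u)$ is the neighborhood of $u$. A distinguishing coloring of a graph $G$ is a (not necessarily proper) vertex coloring such that the only automorphism of $G$ mapping every vertex to a vertex of the same color is the identity; the distinguishing number $D(G)$ is the minimum number of colors in a distinguishing coloring of $G$. Two distinct vertices $u,v$ are twins if $N_G(u)\setminus\{v\}=N_G(v)\setminus\{u\}$. The relation $u\equiv v$ iff $u=v$ or $u,v$ are twins is an equivalence relation; the class of $v$ is denoted $v^*$. The twin graph $G^*$ has the equivalence classes as vertices, distinct classes $u^*,v^*$ being adjacent iff $uv\in E(G)$. A graph $G$ is almost asymmetric if no automorphism of $G$ maps a vertex of one twin class to a vertex of a different twin class. *)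

theory Defs
  imports Main
begin

definition simple_graph :: "'a set \<Rightarrow> ('a \<Rightarrow> 'a \<Rightarrow> bool) \<Rightarrow> bool" where
  "simple_graph V E \<longleftrightarrow> finite V \<and> (\<forall>u v. E u v \<longrightarrow> u \<in> V \<and> v \<in> V)
     \<and> (\<forall>u v. E u v \<longrightarrow> E v u) \<and> (\<forall>u. \<not> E u u)"

definition connected_graph :: "'a set \<Rightarrow> ('a \<Rightarrow> 'a \<Rightarrow> bool) \<Rightarrow> bool" where
  "connected_graph V E \<longleftrightarrow> V \<noteq> {} \<and> (\<forall>u\<in>V. \<forall>v\<in>V. E\<^sup>*\<^sup>* u v)"

definition nbhd :: "'a set \<Rightarrow> ('a \<Rightarrow> 'a \<Rightarrow> bool) \<Rightarrow> 'a \<Rightarrow> 'a set" where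
  "nbhd V E u = {w \<in> V. E u w}"

definition automorphism :: "'a set \<Rightarrow> ('a \<Rightarrow> 'a \<Rightarrow> bool) \<Rightarrow> ('a \<Rightarrow> 'a) \<Rightarrow> bool" where
  "automorphism V E f \<longleftrightarrow> bij_betw f V V \<and> (\<forall>u\<in>V. \<forall>v\<in>V. E u v \<longleftrightarrow> E (f u) (f v))"

definition distinguishing :: "'a set \<Rightarrow> ('a \<Rightarrow> 'a \<Rightarrow> bool) \<Rightarrow> nat \<Rightarrow> ('a \<Rightarrow> nat) \<Rightarrow> bool" where
  "distinguishing V E k c \<longleftrightarrow> c ` V \<subseteq> {..<k} \<and>
     (\<forall>f. automorphism V E f \<and> (\<forall>v\<in>V. c (f v) = c v) \<longrightarrow> (\<forall>v\<in>V. f v = v))"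

definition distinguishing_number :: "'a set \<Rightarrow> ('a \<Rightarrow> 'a \<Rightarrow> bool) \<Rightarrow> nat" where
  "distinguishing_number V E = (LEAST k. \<exists>c. distinguishing V E k c)"

definition twins :: "'a set \<Rightarrow> ('a \<Rightarrow> 'a \<Rightarrow> bool) \<Rightarrow> 'a \<Rightarrow> 'a \<Rightarrow> bool" where
  "twins V E u v \<longleftrightarrow> u \<noteq> v \<and> nbhd V E u - {v} = nbhd V E v - {u}"

definition twin_class :: "'a set \<Rightarrow> ('a \<Rightarrow> 'a \<Rightarrow> bool) \<Rightarrow> 'a \<Rightarrow> 'a set" where
  "twin_class V E v = {u \<in> V. u = v \<or> twins V E u v}"

definition max_twin_class_size :: "'a set \<Rightarrow> ('a \<Rightarrow> 'a \<Rightarrow> bool) \<Rightarrow> nat" where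
  "max_twin_class_size V E = Max ((\<lambda>v. card (twin_class V E v)) ` V)"

definition almost_asymmetric :: "'a set \<Rightarrow> ('a \<Rightarrow> 'a \<Rightarrow> bool) \<Rightarrow> bool" where
  "almost_asymmetric V E \<longleftrightarrow>
     (\<forall>f. automorphism V E f \<longrightarrow> (\<forall>v\<in>V. f v \<in> twin_class V E v))"

end

theory Submission
  imports Defs
begin

lemma twins_iff:
  assumes "simple_graph V E"
  shows "twins V E u v \<longleftrightarrow> u \<noteq> v \<and> (\<forall>z. z \<noteq> u \<and> z \<noteq> v \<longrightarrow> (E u z \<longleftrightarrow> E v z))"
proof -
  have s: "\<And>a b. E a b \<Longrightarrow> a \<in> V \<and> b \<in> V" "\<And>a. \<not> E a a"
    using assms unfolding simple_graph_def by blast+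
  show ?thesis unfolding twins_def nbhd_def set_eq_iff
  proof
    assume h: "u \<noteq> v \<and> (\<forall>x. (x \<in> {w \<in> V. E u w} - {v}) = (x \<in> {w \<in> V. E v w} - {u}))"
    have "E u z = E v z" if z: "z \<noteq> u \<and> z \<noteq> v" for z
      using h[THEN conjunct2, rule_format, of z] z s by blast
    thus "u \<noteq> v \<and> (\<forall>z. z \<noteq> u \<and> z \<noteq> v \<longrightarrow> E u z = E v z)" using h by blast
  next
    assume h: "u \<noteq> v \<and> (\<forall>z. z \<noteq> u \<and> z \<noteq> v \<longrightarrow> E u z = E v z)"
    have "(x \<in> {w \<in> V. E u w} - {v}) = (x \<in> {w \<in> V. E v w} - {u})" for x
      using h s by (cases "x = u"; cases "x = v") auto
    thus "u \<noteq> v \<and> (\<forall>x. (x \<in> {w \<in> V. E u w} - {v}) = (x \<in> {w \<in> V. E v w} - {u}))" using h by blast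
  qed
qed

lemma twins_sym:
  assumes "simple_graph V E" "twins V E u v" shows "twins V E v u"
  using assms by (auto simp: twins_iff)

lemma twins_trans:
  assumes g: "simple_graph V E" and "twins V E u v" "twins V E v w" "u \<noteq> w"
  shows "twins V E u w"
proof -
  have sym: "\<And>a b. E a b \<Longrightarrow> E b a" using g unfolding simple_graph_def by blast
  have 1: "\<forall>z. z \<noteq> u \<and> z \<noteq> v \<longrightarrow> (E u z \<longleftrightarrow> E v z)" "u \<noteq> v"
    using assms by (auto simp: twins_iff)
  have 2: "\<forall>z. z \<noteq> v \<and> z \<noteq> w \<longrightarrow> (E v z \<longleftrightarrow> E w z)" "v \<noteq> w"
    using assms by (auto simp: twins_iff)
  have "E u v \<longleftrightarrow> E w v"
    using 1(1)[rule_format, of w] 2(1)[rule_format, of u] 1(2) 2(2) \<open>u \<noteq> w\<close> sym by blast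
  then show ?thesis using 1 2 \<open>u \<noteq> w\<close> g by (auto simp: twins_iff)
qed

lemma class_eq:
  assumes g: "simple_graph V E" and "x \<in> twin_class V E v"
  shows "twin_class V E x = twin_class V E v"
  using assms twins_sym[OF g] twins_trans[OF g] unfolding twin_class_def by blast

lemma swap_aut:
  assumes g: "simple_graph V E" and tw: "twins V E x y" and xy: "x \<in> V" "y \<in> V"
  shows "automorphism V E (\<lambda>z. if z = x then y else if z = y then x else z)"
proof -
  let ?f = "\<lambda>z. if z = x then y else if z = y then x else z"
  have sym: "\<And>a b. E a b \<Longrightarrow> E b a" using g unfolding simple_graph_def by blast
  have irr: "\<And>a. \<not> E a a" using g unfolding simple_graph_def by blast
  have t: "\<forall>z. z \<noteq> x \<and> z \<noteq> y \<longrightarrow> (E x z \<longleftrightarrow> E y z)" "x \<noteq> y"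
    using tw g by (auto simp: twins_iff)
  have "bij_betw ?f V V"
    by (rule bij_betw_byWitness[where f' = ?f]) (use xy in auto)
  moreover have "\<forall>u\<in>V. \<forall>v\<in>V. E u v \<longleftrightarrow> E (?f u) (?f v)"
  proof (intro ballI)
    fix u v assume "u \<in> V" "v \<in> V"
    show "E u v \<longleftrightarrow> E (?f u) (?f v)"
      using t sym irr by (cases "u = x"; cases "u = y"; cases "v = x"; cases "v = y") auto
  qed
  ultimately show ?thesis unfolding automorphism_def by blast
qed

theorem corollary4p4:
  fixes V :: "'a set" and E :: "'a \<Rightarrow> 'a \<Rightarrow> bool" and m :: nat
  assumes "m > 0"
    and "simple_graph V E"
    and "connected_graph V E"
    and "almost_asymmetric V E"
    and "card V - max_twin_class_size V E \<noteq> m"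
  shows "int (distinguishing_number V E) \<noteq> int (card V) - int m"
proof -
  note g = assms(2)
  have fin: "finite V" using g unfolding simple_graph_def by blast
  have ne: "V \<noteq> {}" using assms(3) unfolding connected_graph_def by blast
  define M where "M = max_twin_class_size V E"
  have sub: "\<And>v. twin_class V E v \<subseteq> V" unfolding twin_class_def by blast
  have finC: "\<And>v. finite (twin_class V E v)" using sub fin finite_subset by blast
  have le: "\<And>v. v \<in> V \<Longrightarrow> card (twin_class V E v) \<le> M"
    unfolding M_def max_twin_class_size_def using fin by (intro Max_ge) auto
  obtain v0 where v0: "v0 \<in> V" "card (twin_class V E v0) = M"
    unfolding M_def max_twin_class_size_def using fin ne
  proof -
    have "Max ((\<lambda>v. card (twin_class V E v)) ` V) \<in> (\<lambda>v. card (twin_class V E v)) ` V"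
      using fin ne by (intro Max_in) auto
    then obtain w where "w \<in> V" "Max ((\<lambda>v. card (twin_class V E v)) ` V) = card (twin_class V E w)"
      by (rule imageE)
    thus ?thesis using that unfolding M_def max_twin_class_size_def by simp
  qed
  have MV: "M \<le> card V" using card_mono[OF fin sub[of v0]] v0(2) by simp
  have self: "\<And>v. v \<in> V \<Longrightarrow> v \<in> twin_class V E v" unfolding twin_class_def by blast
  have lower: "M \<le> k" if d: "distinguishing V E k c" for k c
  proof (rule ccontr)
    assume "\<not> M \<le> k"
    hence lt: "k < card (twin_class V E v0)" using v0 by simp
    have "c ` twin_class V E v0 \<subseteq> {..<k}" using d sub unfolding distinguishing_def by blast
    hence "card (c ` twin_class V E v0) \<le> k" using card_mono[of "{..<k}"] by fastforce
    hence "\<not> inj_on c (twin_class V E v0)" using lt card_image[of c "twin_class V E v0"] by auto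
    then obtain x y where xy: "x \<in> twin_class V E v0" "y \<in> twin_class V E v0" "x \<noteq> y" "c x = c y"
      unfolding inj_on_def by blast
    have tw: "twins V E x y"
      using xy twins_sym[OF g] twins_trans[OF g] unfolding twin_class_def by blast
    have xV: "x \<in> V" "y \<in> V" using xy sub by blast+
    let ?f = "\<lambda>z. if z = x then y else if z = y then x else z"
    have "automorphism V E ?f" by (rule swap_aut[OF g tw xV])
    moreover have "\<forall>v\<in>V. c (?f v) = c v" using xy by auto
    ultimately have "\<forall>v\<in>V. ?f v = v" using d unfolding distinguishing_def by blast
    thus False using xV xy by auto
  qed
  obtain r :: "'a \<Rightarrow> nat" and n where r: "inj_on r V"
    using finite_imp_inj_to_nat_seg[OF fin] by blast
  define c where "c v = card {u \<in> twin_class V E v. r u < r v}" for v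
  have cd: "distinguishing V E M c"
    unfolding distinguishing_def
  proof (intro conjI allI impI)
    show "c ` V \<subseteq> {..<M}"
    proof
      fix y assume "y \<in> c ` V"
      then obtain v where v: "v \<in> V" "y = c v" by blast
      have "{u \<in> twin_class V E v. r u < r v} \<subset> twin_class V E v"
        using self[OF v(1)] by auto
      hence "c v < card (twin_class V E v)" unfolding c_def using finC psubset_card_mono by blast
      thus "y \<in> {..<M}" using le[OF v(1)] v by simp
    qed
  next
    fix f assume f: "automorphism V E f \<and> (\<forall>v\<in>V. c (f v) = c v)"
    show "\<forall>v\<in>V. f v = v"
    proof
      fix v assume v: "v \<in> V"
      have fv: "f v \<in> twin_class V E v" using f assms(4) v unfolding almost_asymmetric_def by blast
      have ceq: "twin_class V E (f v) = twin_class V E v" using class_eq[OF g fv] .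
      have fvV: "f v \<in> V" using fv sub by blast
      show "f v = v"
      proof (rule ccontr)
        assume ne: "f v \<noteq> v"
        hence rne: "r (f v) \<noteq> r v" using r v fvV unfolding inj_on_def by blast
        let ?C = "twin_class V E v"
        have strict: "c a < c b" if "a \<in> ?C" "b \<in> ?C" "r a < r b"
          and ca: "twin_class V E a = ?C" and cb: "twin_class V E b = ?C" for a b
        proof -
          have "{u \<in> ?C. r u < r a} \<subset> {u \<in> ?C. r u < r b}" using that by auto
          thus ?thesis unfolding c_def ca cb by (intro psubset_card_mono) (use finC in auto)
        qed
        have "c (f v) \<noteq> c v"
        proof (cases "r (f v) < r v")
          case True thus ?thesis using strict[OF fv self[OF v] True ceq refl] by simp
        next
          case False hence "r v < r (f v)" using rne by simp
          thus ?thesis using strict[OF self[OF v] fv _ refl ceq] by simp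
        qed
        thus False using f v by blast
      qed
    qed
  qed
  have "distinguishing_number V E = M"
    unfolding distinguishing_number_def
  proof (rule Least_equality)
    show "\<exists>c. distinguishing V E M c" using cd by blast
  next
    fix k assume "\<exists>c. distinguishing V E k c" thus "M \<le> k" using lower by blast
  qed
  thus ?thesis using assms(5) MV unfolding M_def[symmetric] by linarith
qed

end
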